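(* Let $(X,S_b)$ be an $S_b$-metric space with $b\geq 1$, let $x_1,x_2\in X$, and let $f:X\to X$ be a self-mapping for which there exist $\alpha\in(0,1)$ and a non-decreasing function $\varphi:(0,\infty)\to(1,\infty)$ such that for all $x\in X\setminus\{x_1,x_2\}$, $$S_b(x,x,fx)>0 \implies \varphi\big(S_b(x,x,fx)\big)\leq \left[\varphi\left(\frac{S_b(x,x,x_1)}{S_b(x,x,x_2)}\right)\right]^{\alpha}$$ (i.e. $f$ is a Jleli-Samet type $A_{x_1,x_2}$-$S_b$-contraction). Let $$r=\inf\{S_b(x,x,fx): x\neq fx,\ x\in X\}.$$ If $fx_1=x_1$ and $fx_2=x_2$, then $f$ fixes the Apollonius circle $A^{S_b}_r(x_1,x_2)=\left\{x\in X\setminus\{x_2\}: \frac{S_b(x,x,x_1)}{S_b(x,x,x_2)}=r\right\}$, i.e. $fx=x$ for every $x\in A^{S_b}_r(x_1,x_2)$.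
   Context: An $S_b$-metric space $(X,S_b)$ with constant $b\geq 1$ is a nonempty set $X$ with a function $S_b:X\times X\times X\to[0,\infty)$ such that for all $x,y,z,a\in X$: (1) $S_b(x,y,z)=0$ if and only if $x=y=z$; (2) $S_b(x,y,z)\leq b[S_b(x,x,a)+S_b(y,y,a)+S_b(z,z,a)]$. A mapping $f$ fixes a set $\mathcal{F}\subseteq X$ if $\mathcal{F}$ is contained in the fixed point set $\{x\in X: fx=x\}$. *)

theory Defs
  imports Complex_Main
begin

definition Sb_metric_space :: "'a set \<Rightarrow> ('a \<Rightarrow> 'a \<Rightarrow> 'a \<Rightarrow> real) \<Rightarrow> real \<Rightarrow> bool" where
  "Sb_metric_space X S b \<longleftrightarrow> X \<noteq> {} \<and> b \<ge> 1 \<and>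
     (\<forall>x\<in>X. \<forall>y\<in>X. \<forall>z\<in>X. S x y z \<ge> 0) \<and>
     (\<forall>x\<in>X. \<forall>y\<in>X. \<forall>z\<in>X. S x y z = 0 \<longleftrightarrow> x = y \<and> y = z) \<and>
     (\<forall>x\<in>X. \<forall>y\<in>X. \<forall>z\<in>X. \<forall>a\<in>X.
        S x y z \<le> b * (S x x a + S y y a + S z z a))"

definition JS_A_Sb_contraction ::
  "'a set \<Rightarrow> ('a \<Rightarrow> 'a \<Rightarrow> 'a \<Rightarrow> real) \<Rightarrow> ('a \<Rightarrow> 'a) \<Rightarrow> 'a \<Rightarrow> 'a \<Rightarrow> real \<Rightarrow> (real \<Rightarrow> real) \<Rightarrow> bool" where
  "JS_A_Sb_contraction X S f x1 x2 \<alpha> \<phi> \<longleftrightarrow>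
     0 < \<alpha> \<and> \<alpha> < 1 \<and> mono_on {0<..} \<phi> \<and> (\<forall>t>0. \<phi> t > 1) \<and>
     (\<forall>x \<in> X - {x1, x2}. S x x (f x) > 0 \<longrightarrow>
        \<phi> (S x x (f x)) \<le> (\<phi> (S x x x1 / S x x x2)) powr \<alpha>)"

definition apollonius_circle ::
  "'a set \<Rightarrow> ('a \<Rightarrow> 'a \<Rightarrow> 'a \<Rightarrow> real) \<Rightarrow> real \<Rightarrow> 'a \<Rightarrow> 'a \<Rightarrow> 'a set" where
  "apollonius_circle X S r x1 x2 = {x \<in> X - {x2}. S x x x1 / S x x x2 = r}"

end

theory Submission
  imports Defs
begin

theorem theorem2p17:
  fixes X :: "'a set" and S :: "'a \<Rightarrow> 'a \<Rightarrow> 'a \<Rightarrow> real" and b :: real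
    and f :: "'a \<Rightarrow> 'a" and x1 x2 :: 'a and \<alpha> r :: real and \<phi> :: "real \<Rightarrow> real"
  assumes "Sb_metric_space X S b"
    and "x1 \<in> X" and "x2 \<in> X"
    and "\<forall>x\<in>X. f x \<in> X"
    and "JS_A_Sb_contraction X S f x1 x2 \<alpha> \<phi>"
    and "r = Inf {S x x (f x) | x. x \<in> X \<and> x \<noteq> f x}"
    and "f x1 = x1" and "f x2 = x2"
  shows "\<forall>x \<in> apollonius_circle X S r x1 x2. f x = x"
proof
  fix x assume xa: "x \<in> apollonius_circle X S r x1 x2"
  then have xX: "x \<in> X" and xn2: "x \<noteq> x2" and rat: "S x x x1 / S x x x2 = r"
    by (auto simp: apollonius_circle_def)
  show "f x = x"
  proof (rule ccontr)
    assume nf: "f x \<noteq> x"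
    have xn1: "x \<noteq> x1" using nf assms(7) by auto
    have M: "\<forall>x\<in>X. \<forall>y\<in>X. \<forall>z\<in>X. S x y z \<ge> 0"
      "\<forall>x\<in>X. \<forall>y\<in>X. \<forall>z\<in>X. S x y z = 0 \<longleftrightarrow> x = y \<and> y = z"
      using assms(1) unfolding Sb_metric_space_def by auto
    have fX: "f x \<in> X" using assms(4) xX by auto
    have p1: "S x x x1 > 0" using M xX assms(2) xn1
      by (metis order_le_less)
    have p2: "S x x x2 > 0" using M xX assms(3) xn2
      by (metis order_le_less)
    have pf: "S x x (f x) > 0" using M xX fX nf
      by (metis order_le_less)
    have rpos: "r > 0" using p1 p2 rat by (metis divide_pos_pos)
    have rle: "r \<le> S x x (f x)"
      unfolding assms(6)
    proof (rule cInf_lower)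
      show "S x x (f x) \<in> {S x x (f x) |x. x \<in> X \<and> x \<noteq> f x}" using xX nf by auto
      show "bdd_below {S x x (f x) |x. x \<in> X \<and> x \<noteq> f x}"
        unfolding bdd_below_def using M assms(4) by fastforce
    qed
    have C: "0 < \<alpha>" "\<alpha> < 1" "mono_on {0<..} \<phi>" "\<forall>t>0. \<phi> t > 1"
      "\<forall>x \<in> X - {x1, x2}. S x x (f x) > 0 \<longrightarrow>
        \<phi> (S x x (f x)) \<le> (\<phi> (S x x x1 / S x x x2)) powr \<alpha>"
      using assms(5) unfolding JS_A_Sb_contraction_def by auto
    have h1: "\<phi> (S x x (f x)) \<le> \<phi> r powr \<alpha>" using C(5) xX xn1 xn2 pf rat by auto
    have g: "\<phi> r > 1" using C(4) rpos by auto
    have h2: "\<phi> r powr \<alpha> < \<phi> r powr 1" using g C(2) by (intro powr_less_mono) auto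
    have h3: "\<phi> r \<le> \<phi> (S x x (f x))" using C(3) rpos pf rle by (auto intro: mono_onD)
    show False using h1 h2 h3 g by simp
  qed
qed

end
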